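(* Let $k$ be an odd integer with $k\ge 5$, let $D$ be a strong $k$-quasi-transitive digraph with $\mathrm{diam}(D)\ge k+2$, let $u,v\in V(D)$ with $d(u,v)=k+2$, and let $P=x_0x_1\ldots x_{k+2}$ be a shortest $(u,v)$-path with $x_0=u$, $x_{k+2}=v$. Let $O(P)=\{x_1,x_3,\ldots,x_{k+2}\}$ and $E(P)=\{x_0,x_2,\ldots,x_{k+1}\}$. If there exist two distinct vertices $x_i,x_j$ both in $E(P)$ or both in $O(P)$ that are adjacent, then $D[V(P)]$ is a semicomplete digraph and $x_s\rightarrow x_t$ for all indices $0\le t$, $s\le k+2$ with $1\le t+1<s$.
   Context: All digraphs are finite, without loops or multiple arcs (opposite arcs allowed). $x\rightarrow y$ means $xy\in A(D)$; $x,y$ are adjacent if $x\rightarrow y$ or $y\rightarrow x$. For $k\ge 2$, $D$ is $k$-quasi-transitive if for every path $x_0x_1\ldots x_k$ of length $k$, $x_0$ and $x_k$ are adjacent. $d(x,y)$ is the length of a shortest $(x,y)$-path, $\mathrm{diam}(D)=\max_{x,y}d(x,y)$. $D[S]$ is the induced subdigraph. A semicomplete digraph is one in which every two distinct vertices are adjacent. *)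

theory Defs
  imports Main
begin

definition digraph :: "'a set \<Rightarrow> ('a \<times> 'a) set \<Rightarrow> bool" where
  "digraph V A \<longleftrightarrow> finite V \<and> A \<subseteq> V \<times> V \<and> (\<forall>x. (x, x) \<notin> A)"

definition adj :: "('a \<times> 'a) set \<Rightarrow> 'a \<Rightarrow> 'a \<Rightarrow> bool" where
  "adj A x y \<longleftrightarrow> (x, y) \<in> A \<or> (y, x) \<in> A"

text \<open>A (directed) path is a nonempty list of distinct vertices with consecutive arcs;
its length is the number of arcs, i.e. length xs - 1.\<close>

definition is_path :: "'a set \<Rightarrow> ('a \<times> 'a) set \<Rightarrow> 'a list \<Rightarrow> bool" where
  "is_path V A xs \<longleftrightarrow> xs \<noteq> [] \<and> distinct xs \<and> set xs \<subseteq> V \<and>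
     (\<forall>i. Suc i < length xs \<longrightarrow> (xs ! i, xs ! Suc i) \<in> A)"

definition k_quasi_transitive :: "'a set \<Rightarrow> ('a \<times> 'a) set \<Rightarrow> nat \<Rightarrow> bool" where
  "k_quasi_transitive V A k \<longleftrightarrow>
     (\<forall>xs. is_path V A xs \<and> length xs = k + 1 \<longrightarrow> adj A (hd xs) (last xs))"

definition strong :: "'a set \<Rightarrow> ('a \<times> 'a) set \<Rightarrow> bool" where
  "strong V A \<longleftrightarrow>
     (\<forall>x\<in>V. \<forall>y\<in>V. \<exists>xs. is_path V A xs \<and> hd xs = x \<and> last xs = y)"

definition dist :: "'a set \<Rightarrow> ('a \<times> 'a) set \<Rightarrow> 'a \<Rightarrow> 'a \<Rightarrow> nat" where
  "dist V A x y = (LEAST n. \<exists>xs. is_path V A xs \<and> hd xs = x \<and> last xs = y \<and> length xs = Suc n)"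

definition diam :: "'a set \<Rightarrow> ('a \<times> 'a) set \<Rightarrow> nat" where
  "diam V A = Max {dist V A x y | x y. x \<in> V \<and> y \<in> V}"

definition semicomplete :: "'a set \<Rightarrow> ('a \<times> 'a) set \<Rightarrow> bool" where
  "semicomplete V A \<longleftrightarrow> (\<forall>x\<in>V. \<forall>y\<in>V. x \<noteq> y \<longrightarrow> adj A x y)"

definition induced_arcs :: "('a \<times> 'a) set \<Rightarrow> 'a set \<Rightarrow> ('a \<times> 'a) set" where
  "induced_arcs A S = A \<inter> (S \<times> S)"

end

theory Submission
  imports Defs
begin

fun cok :: "(nat \<Rightarrow> nat \<Rightarrow> bool) \<Rightarrow> nat list \<Rightarrow> bool" where
  "cok R (x # y # zs) = ((y = Suc x \<or> R x y) \<and> cok R (y # zs))"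
| "cok R _ = True"

lemma cok_nth: "cok R xs \<Longrightarrow> Suc i < length xs \<Longrightarrow> xs ! Suc i = Suc (xs ! i) \<or> R (xs ! i) (xs ! Suc i)"
proof (induction R xs arbitrary: i rule: cok.induct)
  case (1 R x y zs)
  then show ?case by (cases i) auto
qed auto

lemma cok_Cons: "cok R (x # xs) \<longleftrightarrow> cok R xs \<and> (xs \<noteq> [] \<longrightarrow> hd xs = Suc x \<or> R x (hd xs))"
  by (cases xs) auto

lemma cok_append: "cok R xs \<Longrightarrow> cok R ys \<Longrightarrow> (xs \<noteq> [] \<Longrightarrow> ys \<noteq> [] \<Longrightarrow> hd ys = Suc (last xs) \<or> R (last xs) (hd ys)) \<Longrightarrow> cok R (xs @ ys)"
proof (induction xs)
  case Nil
  then show ?case by simp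
next
  case (Cons x xs)
  then show ?case by (cases xs) (auto simp: cok_Cons)
qed

lemma cok_upt': "cok R [a..<b]"
proof (induction b)
  case 0
  then show ?case by simp
next
  case (Suc b)
  show ?case
  proof (cases "a \<le> b")
    case True
    then have "[a..<Suc b] = [a..<b] @ [b]" by simp
    moreover have "cok R ([a..<b] @ [b])"
      by (rule cok_append) (use Suc True in auto)
    ultimately show ?thesis by simp
  next
    case False
    then show ?thesis by simp
  qed
qed

fun blocks :: "(nat \<times> nat) list \<Rightarrow> nat list" where
  "blocks [] = []"
| "blocks ((a, b) # bs) = [a..<Suc b] @ blocks bs"

fun wfb :: "(nat \<Rightarrow> nat \<Rightarrow> bool) \<Rightarrow> (nat \<times> nat) list \<Rightarrow> bool" where
  "wfb R [] = True"
| "wfb R [(a, b)] = (a \<le> b)"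
| "wfb R ((a, b) # (c, d) # bs) = (a \<le> b \<and> d < a \<and> R b c \<and> wfb R ((c, d) # bs))"

declare upt_Suc[simp del]

lemma wfb_props:
  "wfb R bs \<Longrightarrow> bs \<noteq> [] \<Longrightarrow> distinct (blocks bs) \<and> cok R (blocks bs) \<and>
     (\<forall>x\<in>set (blocks bs). x \<le> snd (hd bs)) \<and> blocks bs \<noteq> [] \<and>
     hd (blocks bs) = fst (hd bs) \<and> last (blocks bs) = snd (last bs)"
proof (induction R bs rule: wfb.induct)
  case (1 R)
  then show ?case by simp
next
  case (2 R a b)
  have "cok R [a..<Suc b]" by (rule cok_upt')
  moreover have "hd [a..<Suc b] = a" "last [a..<Suc b] = b" using 2 by simp_all
  ultimately show ?case using 2 by simp
next
  case (3 R a b c d bs)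
  let ?X = "[a..<Suc b]"
  let ?Y = "blocks ((c, d) # bs)"
  have ab: "a \<le> b" "d < a" "R b c" using "3.prems"(1) by simp_all
  have w: "wfb R ((c, d) # bs)" using "3.prems"(1) by simp
  have IH0: "distinct ?Y \<and> cok R ?Y \<and> (\<forall>x\<in>set ?Y. x \<le> snd (hd ((c, d) # bs))) \<and> ?Y \<noteq> [] \<and>
     hd ?Y = fst (hd ((c, d) # bs)) \<and> last ?Y = snd (last ((c, d) # bs))"
    by (rule "3.IH"[OF w]) simp
  have IH: "distinct ?Y" "cok R ?Y" "\<forall>x\<in>set ?Y. x \<le> d" "?Y \<noteq> []"
     "hd ?Y = c" "last ?Y = snd (last ((c, d) # bs))"
    using IH0 unfolding list.sel prod.sel by blast+
  have eq: "blocks ((a, b) # (c, d) # bs) = ?X @ ?Y" by (simp only: blocks.simps)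
  have sx: "\<And>x. x \<in> set ?X \<longleftrightarrow> a \<le> x \<and> x \<le> b" by auto
  have hx: "hd ?X = a" "last ?X = b" "?X \<noteq> []" using ab by simp_all
  have d1: "distinct (?X @ ?Y)"
  proof -
    have "set ?X \<inter> set ?Y = {}" using IH(3) ab sx by fastforce
    then show ?thesis using IH(1) by simp
  qed
  have c1: "cok R (?X @ ?Y)"
    by (rule cok_append[OF cok_upt' IH(2)]) (use hx IH(5) ab in simp)
  have b1: "\<forall>x\<in>set (?X @ ?Y). x \<le> b"
  proof
    fix x assume "x \<in> set (?X @ ?Y)"
    then have "x \<in> set ?X \<or> x \<in> set ?Y" by simp
    then show "x \<le> b"
    proof
      assume "x \<in> set ?X" then show ?thesis using sx by blast
    next
      assume "x \<in> set ?Y" then have "x \<le> d" using IH(3) by blast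
      then show ?thesis using ab by linarith
    qed
  qed
  have h1: "hd (?X @ ?Y) = a" using hx by simp
  have l1: "last (?X @ ?Y) = snd (last ((a, b) # (c, d) # bs))" using IH(4,6) by simp
  have n1: "?X @ ?Y \<noteq> []" using hx by simp
  show ?case unfolding eq using d1 c1 b1 h1 l1 n1 by (simp only: list.sel prod.sel simp_thms)
qed

locale pre =
  fixes V :: "'a set" and A :: "('a \<times> 'a) set" and k :: nat and P :: "'a list"
  assumes path: "is_path V A P" and len: "length P = k + 3"
begin

definition R :: "nat \<Rightarrow> nat \<Rightarrow> bool" where "R a b \<longleftrightarrow> (P ! a, P ! b) \<in> A"

lemma idx_path:
  assumes "distinct L" "\<forall>x\<in>set L. x \<le> k + 2" "L \<noteq> []" "cok R L"
  shows "is_path V A (map ((!) P) L)"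
proof -
  have dP: "distinct P" and sP: "set P \<subseteq> V" and aP: "\<And>i. Suc i < length P \<Longrightarrow> (P ! i, P ! Suc i) \<in> A"
    using path unfolding is_path_def by auto
  have "distinct (map ((!) P) L)"
    using assms(1,2) dP len by (auto simp: distinct_map intro!: inj_on_nth)
  moreover have "set (map ((!) P) L) \<subseteq> V"
    using assms(2) sP len by (force)
  moreover have "\<forall>i. Suc i < length (map ((!) P) L) \<longrightarrow> (map ((!) P) L ! i, map ((!) P) L ! Suc i) \<in> A"
  proof (intro allI impI)
    fix i assume i: "Suc i < length (map ((!) P) L)"
    then have i': "Suc i < length L" by simp
    have le: "L ! Suc i \<le> k + 2" using assms(2) i' by auto
    from cok_nth[OF assms(4) i'] show "(map ((!) P) L ! i, map ((!) P) L ! Suc i) \<in> A"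
    proof
      assume "L ! Suc i = Suc (L ! i)"
      then show ?thesis using aP[of "L ! i"] le len i' by auto
    next
      assume "R (L ! i) (L ! Suc i)"
      then show ?thesis using i' by (simp add: R_def)
    qed
  qed
  ultimately show ?thesis using assms(3) unfolding is_path_def by auto
qed

end

locale setting = pre +
  assumes kqt: "k_quasi_transitive V A k"
    and nofwd: "\<And>a b. a + 1 < b \<Longrightarrow> b \<le> k + 2 \<Longrightarrow> (P ! a, P ! b) \<notin> A"
    and oddk: "odd k" and k5: "k \<ge> 5"
begin

lemma kq_idx:
  assumes "distinct L" "\<forall>x\<in>set L. x \<le> k + 2" "length L = k + 1" "cok R L"
  shows "adj A (P ! hd L) (P ! last L)"
proof -
  have ne: "L \<noteq> []" using assms(3) by auto
  have "is_path V A (map ((!) P) L)" using idx_path assms ne by auto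
  then have "adj A (hd (map ((!) P) L)) (last (map ((!) P) L))"
    using kqt assms(3) unfolding k_quasi_transitive_def by auto
  then show ?thesis using ne by (simp add: hd_map last_map)
qed

lemma back_arc: "adj A (P ! x) (P ! y) \<Longrightarrow> y + 2 \<le> x \<Longrightarrow> x \<le> k + 2 \<Longrightarrow> R x y"
  using nofwd[of y x] unfolding adj_def R_def by auto

lemma mkarc:
  assumes "wfb R bs" "bs \<noteq> []" "fst (hd bs) = s" "snd (last bs) = t" "snd (hd bs) \<le> k + 2"
    "length (blocks bs) = k + 1" "t + 2 \<le> s"
  shows "R s t"
proof -
  note W = wfb_props[OF assms(1,2)]
  have "adj A (P ! hd (blocks bs)) (P ! last (blocks bs))"
    using W assms(5,6) by (intro kq_idx) auto
  then have "adj A (P ! s) (P ! t)" using W assms(3,4) by simp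
  moreover have "s \<le> k + 2" using W assms(3,5) by (metis hd_in_set order_trans)
  ultimately show ?thesis using back_arc assms(7) by auto
qed

lemma mkarc':
  assumes "wfb R bs" "bs \<noteq> []" "fst (hd bs) = t" "snd (last bs) = s" "snd (hd bs) \<le> k + 2"
    "length (blocks bs) = k + 1" "t + 2 \<le> s"
  shows "R s t"
proof -
  note W = wfb_props[OF assms(1,2)]
  have "adj A (P ! hd (blocks bs)) (P ! last (blocks bs))"
    using W assms(5,6) by (intro kq_idx) auto
  then have "adj A (P ! s) (P ! t)" using W assms(3,4) by (simp add: adj_def; blast)
  moreover have "s \<le> k + 2" using W assms(4,5) by (metis last_in_set order_trans)
  ultimately show ?thesis using back_arc assms(7) by auto
qed

lemma B1: "R k 0"
  by (rule mkarc'[where bs="[(0,k)]"]) (use k5 in auto)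
lemma B2: "R (k+1) 1"
  by (rule mkarc'[where bs="[(1,k+1)]"]) (use k5 in auto)
lemma B3: "R (k+2) 2"
  by (rule mkarc'[where bs="[(2,k+2)]"]) (use k5 in auto)
lemma S2: "R (k+2) 0"
  by (rule mkarc[where bs="[(k+2,k+2),(2,k),(0,0)]"]) (use k5 B1 B3 in auto)


lemma D3: "t + 3 \<le> k + 2 \<Longrightarrow> R (t + 3) t"
  by (rule mkarc[where bs="[(t+3,k+2),(0,t)]"]) (use S2 in auto)

lemma F_step: "R (k+2) (x+2) \<Longrightarrow> 1 \<le> x \<Longrightarrow> x + 3 \<le> k + 2 \<Longrightarrow> R (k+2) x"
  by (rule mkarc[where bs="[(k+2,k+2),(x+2,k+1),(1,x)]"]) (use B2 in auto)

lemma F_clos: "R (k+2) (x' + 2 * m) \<Longrightarrow> 1 \<le> x' \<Longrightarrow> x' + 2 * m \<le> k \<Longrightarrow> R (k+2) x'"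
proof (induction m arbitrary: x')
  case 0
  then show ?case by simp
next
  case (Suc m)
  have "R (k+2) (x' + 2)" using Suc.IH[of "x' + 2"] Suc.prems by (simp add: algebra_simps)
  then show ?case using F_step Suc.prems by auto
qed

lemma F_clos': "R (k+2) x \<Longrightarrow> 1 \<le> x' \<Longrightarrow> x' \<le> x \<Longrightarrow> x \<le> k \<Longrightarrow> even (x - x') \<Longrightarrow> R (k+2) x'"
proof -
  assume a: "R (k+2) x" "1 \<le> x'" "x' \<le> x" "x \<le> k" "even (x - x')"
  then obtain m where "x - x' = 2 * m" unfolding dvd_def by blast
  then have "x = x' + 2 * m" using a(3) by simp
  then show ?thesis using F_clos[of x' m] a by simp
qed

lemma G_step: "R z 0 \<Longrightarrow> 2 \<le> z \<Longrightarrow> z + 3 \<le> k + 2 \<Longrightarrow> R (z+2) 0"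
  by (rule mkarc[where bs="[(z+2,k+1),(1,z),(0,0)]"]) (use B2 in auto)

lemma G_clos: "R z 0 \<Longrightarrow> 2 \<le> z \<Longrightarrow> z + 2 * m \<le> k + 1 \<Longrightarrow> R (z + 2 * m) 0"
proof (induction m)
  case 0
  then show ?case by simp
next
  case (Suc m)
  have "R (z + 2 * m) 0" using Suc by simp
  then have "R (z + 2 * m + 2) 0" using G_step[of "z + 2 * m"] Suc.prems by simp
  then show ?case by (simp add: algebra_simps)
qed

lemma G_clos': "R z 0 \<Longrightarrow> 2 \<le> z \<Longrightarrow> z \<le> y \<Longrightarrow> y \<le> k + 1 \<Longrightarrow> even (y - z) \<Longrightarrow> R y 0"
proof -
  assume a: "R z 0" "2 \<le> z" "z \<le> y" "y \<le> k + 1" "even (y - z)"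
  then obtain m where "y - z = 2 * m" unfolding dvd_def by blast
  then have "y = z + 2 * m" using a(3) by simp
  then show ?thesis using G_clos[of z m] a by simp
qed

lemma Fodd: "even x \<Longrightarrow> x + 3 \<le> k + 2 \<Longrightarrow> R (k+2) x"
proof -
  assume a: "even x" "x + 3 \<le> k + 2"
  show ?thesis
  proof (cases "x = 0")
    case True
    then show ?thesis using S2 by simp
  next
    case False
    have "R (k+2) (k - 1)" using D3[of "k - 1"] k5 by simp
    moreover have "even (k - 1 - x)" using a oddk by presburger
    ultimately show ?thesis using F_clos'[of "k - 1" x] a False by simp
  qed
qed

lemma Godd: "odd y \<Longrightarrow> 3 \<le> y \<Longrightarrow> y \<le> k + 2 \<Longrightarrow> R y 0"
proof -
  assume a: "odd y" "3 \<le> y" "y \<le> k + 2"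
  show ?thesis
  proof (cases "y = k + 2")
    case True
    then show ?thesis using S2 by simp
  next
    case False
    then have "y \<le> k + 1" using a by simp
    moreover have "R 3 0" using D3[of 0] k5 by simp
    moreover have "even (y - 3)" using a by presburger
    ultimately show ?thesis using G_clos'[of 3 y] a by simp
  qed
qed

lemma OA1: "odd t \<Longrightarrow> t + 3 \<le> s \<Longrightarrow> s \<le> k + 2 \<Longrightarrow> odd (s - t) \<Longrightarrow> R s t"
proof -
  assume a: "odd t" "t + 3 \<le> s" "s \<le> k + 2" "odd (s - t)"
  show ?thesis
  proof (cases "s = t + 3")
    case True
    then show ?thesis using D3[of t] a by simp
  next
    case False
    then have s5: "t + 5 \<le> s" using a by presburger
    have r1: "R (k+2) (t+1)" using Fodd[of "t+1"] a s5 by simp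
    have "odd (s - 3)" "3 \<le> s - 3" "s - 3 \<le> k + 2" using a s5 by presburger+
    then have r2: "R (s-3) 0" using Godd[of "s-3"] by blast
    show ?thesis
      by (rule mkarc[where bs="[(s,k+2),(t+1,s-3),(0,t)]"]) (use r1 r2 a s5 in auto)
  qed
qed

lemma OA: "t + 3 \<le> s \<Longrightarrow> s \<le> k + 2 \<Longrightarrow> odd (s - t) \<Longrightarrow> R s t"
proof -
  assume a: "t + 3 \<le> s" "s \<le> k + 2" "odd (s - t)"
  consider "odd t" | "t = 0" | "s = k + 2" | "s = t + 3" | "even t" "t \<noteq> 0" "s \<noteq> k + 2" "s \<noteq> t + 3"
    by blast
  then show ?thesis
  proof cases
    case 1 then show ?thesis using OA1 a by blast
  next
    case 2 then show ?thesis using Godd[of s] a by simp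
  next
    case 3
    have "even t" "t + 3 \<le> k + 2" using 3 a oddk by presburger+
    then show ?thesis using Fodd[of t] 3 by simp
  next
    case 4 then show ?thesis using D3[of t] a by simp
  next
    case 5
    have s5: "t + 5 \<le> s" "s \<le> k" "2 \<le> t" using a 5 oddk by presburger+
    have "odd (t + 1)" "t + 1 + 3 \<le> k + 1" "k + 1 \<le> k + 2" "odd (k + 1 - (t + 1))"
      using a 5 s5 oddk by presburger+
    then have r1: "R (k+1) (t+1)" using OA1[of "t+1" "k+1"] by blast
    have "odd (1::nat)" "1 + 3 \<le> s - 1" "s - 1 \<le> k + 2" "odd (s - 1 - 1)"
      using a 5 s5 by presburger+
    then have r2: "R (s-1) 1" using OA1[of 1 "s-1"] by blast
    show ?thesis
      by (rule mkarc[where bs="[(s,k+1),(t+1,s-1),(1,t)]"]) (use r1 r2 a s5 in auto)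
  qed
qed


lemma toL: "R y 0 \<Longrightarrow> even y \<Longrightarrow> 2 \<le> y \<Longrightarrow> y \<le> k + 1 \<Longrightarrow> R (k+1) 0"
proof -
  assume a: "R y 0" "even y" "2 \<le> y" "y \<le> k + 1"
  have "even (k + 1 - y)" using a oddk by presburger
  then show ?thesis using G_clos'[of y "k+1"] a by simp
qed

lemma toR: "R (k+2) x \<Longrightarrow> odd x \<Longrightarrow> x \<le> k \<Longrightarrow> R (k+2) 1"
proof -
  assume a: "R (k+2) x" "odd x" "x \<le> k"
  have "even (x - 1)" "1 \<le> x" using a by presburger+
  then show ?thesis using F_clos'[of x 1] a by simp
qed

lemma seed_even:
  assumes sd: "R j i" and ij: "i + 2 \<le> j" "j \<le> k + 2" and ev: "even i" "even j"
  shows "R (k+1) 0"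
proof -
  have jk: "j \<le> k - 1 \<or> j = k + 1" using ij ev oddk by presburger
  have "i = 0 \<or> i = 2 \<or> 4 \<le> i" using ev by presburger
  then consider "i = 0" | "i = 2" | "4 \<le> i" by blast
  then show ?thesis
  proof cases
    case 1
    then show ?thesis using toL[of j] sd ij ev jk k5 by auto
  next
    case 2
    show ?thesis using jk
    proof
      assume j: "j \<le> k - 1"
      have r1: "R (k+2) 4" by (rule OA) (use k5 oddk in presburger)+
      have r2: "R 3 0" using D3[of 0] k5 by simp
      have "R (j+2) 0"
        by (rule mkarc[where bs="[(j+2,k+2),(4,j),(2,3),(0,0)]"]) (use r1 r2 sd 2 ij j k5 in auto)
      then show ?thesis using toL[of "j+2"] ev j ij by auto
    next
      assume j: "j = k + 1"
      show ?thesis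
        by (rule mkarc[where bs="[(k+1,k+1),(2,k),(0,0)]"]) (use B1 sd 2 j k5 in auto)
    qed
  next
    case 3
    have r3: "R (i+1) 2" by (rule OA) (use 3 ev ij in presburger)+
    have r4: "R (i-1) 0" by (rule OA) (use 3 ev ij in presburger)+
    show ?thesis using jk
    proof
      assume j: "j \<le> k - 1"
      have r1: "R (k+2) (i+2)" by (rule OA) (use 3 ev j ij oddk in presburger)+
      have "R (j+2) 0"
        by (rule mkarc[where bs="[(j+2,k+2),(i+2,j),(i,i+1),(2,i-1),(0,0)]"])
          (use r1 r3 r4 sd 3 ij j k5 in auto)
      then show ?thesis using toL[of "j+2"] ev j ij by auto
    next
      assume j: "j = k + 1"
      have r5: "R k 2" by (rule OA) (use k5 oddk in presburger)+
      show ?thesis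
        by (rule mkarc[where bs="[(k+1,k+1),(i,k),(2,i-1),(0,0)]"]) (use r4 r5 sd 3 ij j k5 in auto)
    qed
  qed
qed

lemma seed_odd:
  assumes sd: "R j i" and ij: "i + 2 \<le> j" "j \<le> k + 2" and od: "odd i" "odd j"
  shows "R (k+2) 1"
proof -
  have jk: "j \<le> k - 2 \<or> j = k \<or> j = k + 2" using ij od oddk by presburger
  have r5: "R k 2" by (rule OA) (use k5 oddk in presburger)+
  consider "j = k + 2" | "j \<le> k - 2 \<or> j = k" using jk by blast
  then show ?thesis
  proof cases
    case 1
    then show ?thesis using toR[of i] sd ij od by auto
  next
    case 2
    have "i = 1 \<or> 3 \<le> i" using od by presburger
    then consider (one) "i = 1" | (three) "3 \<le> i" by blast
    then show ?thesis
    proof cases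
      case one
      show ?thesis using 2
      proof
        assume j: "j \<le> k - 2"
        have r1: "R (k+2) (j+1)" by (rule OA) (use j od oddk ij in presburger)+
        show ?thesis
          by (rule mkarc[where bs="[(k+2,k+2),(j+1,k),(2,j),(1,1)]"]) (use r1 r5 sd one ij j k5 in auto)
      next
        assume j: "j = k"
        show ?thesis
          by (rule mkarc[where bs="[(k+2,k+2),(2,k),(1,1)]"]) (use B3 sd one j k5 in auto)
      qed
    next
      case three
      have "R (k+2) (i-2)" using 2
      proof
        assume j: "j \<le> k - 2"
        have r1: "R (k+2) (j+1)" by (rule OA) (use j od oddk ij in presburger)+
        have r2: "R k (j-1)" by (rule OA) (use j od oddk ij in presburger)+
        have r3: "R (j-2) 0" by (rule OA) (use j od oddk ij three in presburger)+
        show ?thesis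
          by (rule mkarc[where bs="[(k+2,k+2),(j+1,k),(j-1,j),(i,j-2),(0,i-2)]"])
            (use r1 r2 r3 sd three ij j k5 in auto)
      next
        assume j: "j = k"
        have r1: "R (k+2) (k-1)" using D3[of "k-1"] k5 by simp
        have r3: "R (k-2) 0" by (rule OA) (use k5 oddk in presburger)+
        show ?thesis
          by (rule mkarc[where bs="[(k+2,k+2),(k-1,k),(i,k-2),(0,i-2)]"])
            (use r1 r3 sd three ij j k5 in auto)
      qed
      then show ?thesis using toR[of "i-2"] od three ij by auto
    qed
  qed
qed

lemma L1: "R (k+1) 0 \<Longrightarrow> R (k+2) 1"
proof -
  assume a: "R (k+1) 0"
  have r: "R 2 0"
    by (rule mkarc[where bs="[(2,k+1),(0,0)]"]) (use a k5 in auto)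
  have "even (k - 1 - 2)" using oddk by presburger
  then have r2: "R (k-1) 0" using G_clos'[of 2 "k-1"] r k5 by simp
  show ?thesis
    by (rule mkarc[where bs="[(k+2,k+2),(2,k-1),(0,1)]"]) (use r2 B3 k5 in auto)
qed

lemma Rkk: "R (k+2) 1 \<Longrightarrow> R (k+2) k"
  by (rule mkarc[where bs="[(k+2,k+2),(1,k)]"]) (use k5 in auto)

lemma L2: "R (k+2) 1 \<Longrightarrow> R (k+1) 0"
proof -
  assume a: "R (k+2) 1"
  have "even (k - 3)" using oddk by presburger
  then have r2: "R (k+2) 3" using F_clos'[of k 3] Rkk[OF a] k5 by simp
  show ?thesis
    by (rule mkarc[where bs="[(k+1,k+2),(3,k),(0,0)]"]) (use r2 B1 k5 in auto)
qed

lemma F_all: "R (k+2) 1 \<Longrightarrow> x + 2 \<le> k + 2 \<Longrightarrow> R (k+2) x"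
proof -
  assume a: "R (k+2) 1" "x + 2 \<le> k + 2"
  show ?thesis
  proof (cases "even x")
    case True
    then have "x + 3 \<le> k + 2" using a oddk by presburger
    then show ?thesis using Fodd True by simp
  next
    case False
    then have "even (k - x)" "1 \<le> x" using a oddk by presburger+
    then show ?thesis using F_clos'[of k x] Rkk[OF a(1)] a by simp
  qed
qed

lemma G_all: "R (k+1) 0 \<Longrightarrow> 2 \<le> y \<Longrightarrow> y \<le> k + 2 \<Longrightarrow> R y 0"
proof -
  assume a: "R (k+1) 0" "2 \<le> y" "y \<le> k + 2"
  have r: "R 2 0"
    by (rule mkarc[where bs="[(2,k+1),(0,0)]"]) (use a k5 in auto)
  show ?thesis
  proof (cases "even y")
    case True
    then have "y \<le> k + 1" "even (y - 2)" using a oddk by presburger+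
    then show ?thesis using G_clos'[of 2 y] r a by simp
  next
    case False
    then have "3 \<le> y" using a by presburger
    then show ?thesis using Godd False a by simp
  qed
qed

lemma all_arcs:
  assumes f: "R (k+2) 1" and g: "R (k+1) 0" and st: "t + 2 \<le> s" "s \<le> k + 2"
  shows "R s t"
proof -
  consider "t = 0" | "s = k + 2" | "s = t + 2" "t \<noteq> 0" "s \<noteq> k + 2" | "s = t + 3"
    | "t + 4 \<le> s" "t \<noteq> 0" "s \<noteq> k + 2" using st by linarith
  then show ?thesis
  proof cases
    case 1 then show ?thesis using G_all[OF g, of s] st by simp
  next
    case 2 then show ?thesis using F_all[OF f, of t] st by simp
  next
    case 3
    show ?thesis
      by (rule mkarc[where bs="[(s,k+2),(1,t)]"]) (use f 3 st k5 in auto)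
  next
    case 4 then show ?thesis using D3[of t] st by simp
  next
    case 5
    have r1: "R (k+2) (t+1)" using F_all[OF f, of "t+1"] 5 st by simp
    have r2: "R (s-3) 0" using G_all[OF g, of "s-3"] 5 st by simp
    show ?thesis
      by (rule mkarc[where bs="[(s,k+2),(t+1,s-3),(0,t)]"]) (use r1 r2 5 st k5 in auto)
  qed
qed

lemma main_arcs:
  assumes sd: "R j i" and ij: "i + 2 \<le> j" "j \<le> k + 2" and ev: "even (j - i)"
    and st: "t + 2 \<le> s" "s \<le> k + 2"
  shows "R s t"
proof -
  have "R (k+1) 0 \<and> R (k+2) 1"
  proof (cases "even i")
    case True
    then have "even j" using ev ij by presburger
    then have "R (k+1) 0" using seed_even[OF sd ij] True by simp
    then show ?thesis using L1 by simp
  next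
    case False
    then have "odd j" using ev ij by presburger
    then have "R (k+2) 1" using seed_odd[OF sd ij] False by simp
    then show ?thesis using L2 by simp
  qed
  then show ?thesis using all_arcs st by simp
qed

end

theorem lemma2p4:
  fixes V :: "'a set" and A :: "('a \<times> 'a) set" and k :: nat
    and u v :: 'a and P :: "'a list"
  assumes "odd k" and "k \<ge> 5"
    and "digraph V A" and "strong V A" and "k_quasi_transitive V A k"
    and "diam V A \<ge> k + 2"
    and "u \<in> V" and "v \<in> V" and "dist V A u v = k + 2"
    and "is_path V A P" and "length P = k + 3" and "hd P = u" and "last P = v"
    and "\<exists>i j. i \<le> k + 2 \<and> j \<le> k + 2 \<and> i \<noteq> j \<and> (even i \<longleftrightarrow> even j)
               \<and> adj A (P ! i) (P ! j)"
  shows "semicomplete (set P) (induced_arcs A (set P)) \<and>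
         (\<forall>s t. s \<le> k + 2 \<and> t + 1 < s \<longrightarrow> (P ! s, P ! t) \<in> A)"
proof -
  have Pne: "P \<noteq> []" using assms(11) by auto
  interpret pre V A k P using assms(10,11) by unfold_locales
  have cons: "\<And>i. Suc i < length P \<Longrightarrow> (P ! i, P ! Suc i) \<in> A"
    using assms(10) unfolding is_path_def by auto
  have nofwd: "(P ! a, P ! b) \<notin> A" if ab: "a + 1 < b" "b \<le> k + 2" for a b
  proof
    assume arc: "(P ! a, P ! b) \<in> A"
    let ?L = "[0..<Suc a] @ [b..<k+3]"
    have c: "cok R ?L"
      by (rule cok_append[OF cok_upt' cok_upt']) (use ab arc in \<open>auto simp: R_def\<close>)
    have d: "distinct ?L" using ab by auto
    have le: "\<forall>x\<in>set ?L. x \<le> k+2" using ab by auto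
    have ne: "?L \<noteq> []" by simp
    have p: "is_path V A (map ((!) P) ?L)" using idx_path[OF d le ne c] .
    have hL: "hd ?L = 0" by simp
    have lL: "last ?L = k + 2" using ab by simp
    have "hd (map ((!) P) ?L) = P ! hd ?L" using ne by (rule hd_map)
    also have "\<dots> = hd P" using hL hd_conv_nth[OF Pne] by simp
    finally have h: "hd (map ((!) P) ?L) = u" using assms(12) by simp
    have "last (map ((!) P) ?L) = P ! last ?L" using ne by (rule last_map)
    also have "\<dots> = last P" using lL last_conv_nth[OF Pne] assms(11) by simp
    finally have l: "last (map ((!) P) ?L) = v" using assms(13) by simp
    have n: "length (map ((!) P) ?L) = Suc (a + (k + 3 - b))" using ab by simp
    have "dist V A u v \<le> a + (k + 3 - b)"
      unfolding dist_def by (rule Least_le) (use p h l n in blast)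
    then show False using assms(9) ab by linarith
  qed
  interpret setting V A k P using assms(1,2,5) nofwd by unfold_locales auto
  obtain i j where ij: "i \<le> k+2" "j \<le> k+2" "i \<noteq> j" "even i = even j" "adj A (P!i) (P!j)"
    using assms(14) by blast
  define a where "a = max i j"
  define b where "b = min i j"
  have ab: "b + 2 \<le> a" "a \<le> k + 2" "even (a - b)" using ij unfolding a_def b_def by presburger+
  have "adj A (P!a) (P!b)" using ij(5) unfolding a_def b_def adj_def by (cases "i \<le> j") auto
  then have sd: "R a b" using back_arc ab by blast
  have all: "R s t" if "t + 2 \<le> s" "s \<le> k + 2" for s t
    using main_arcs[OF sd ab(1,2,3) that] .
  show ?thesis
  proof
    show "semicomplete (set P) (induced_arcs A (set P))"
      unfolding semicomplete_def induced_arcs_def adj_def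
    proof (intro ballI impI)
      fix x y assume x: "x \<in> set P" and y: "y \<in> set P" and xy: "x \<noteq> y"
      obtain p where p: "p < length P" "x = P ! p" using x by (auto simp: in_set_conv_nth)
      obtain q where q: "q < length P" "y = P ! q" using y by (auto simp: in_set_conv_nth)
      have pq: "p \<noteq> q" using p q xy by auto
      have "(x, y) \<in> A \<or> (y, x) \<in> A"
      proof -
        consider "q = Suc p" | "p = Suc q" | "q + 2 \<le> p" | "p + 2 \<le> q" using pq by linarith
        then show ?thesis
        proof cases
          case 1 then show ?thesis using cons[of p] p q by auto
        next
          case 2 then show ?thesis using cons[of q] p q by auto
        next
          case 3 then show ?thesis using all[of q p] p q assms(11) by (auto simp: R_def)
        next
          case 4 then show ?thesis using all[of p q] p q assms(11) by (auto simp: R_def)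
        qed
      qed
      then show "(x, y) \<in> A \<inter> set P \<times> set P \<or> (y, x) \<in> A \<inter> set P \<times> set P"
        using x y by auto
    qed
  next
    show "\<forall>s t. s \<le> k + 2 \<and> t + 1 < s \<longrightarrow> (P ! s, P ! t) \<in> A"
      using all by (auto simp: R_def)
  qed
qed

end
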